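(* Let $\mu,\nu$ be Borel probability measures on $[0,1)$ such that $\mu$ does not charge the boundaries of dyadic intervals ($\mu(\{j2^{-k}\})=0$ for all integers $j,k\ge0$) and $\nu$ is dyadically doubling with constant $D_\nu$. For every $\kappa>0$ there is a constant $C$, depending only on $\kappa$ and $D_\nu$, such that for every $I\in\mathcal{D}$ and every admissible pair $(N_1,N_2)$, $$\Delta_{\mu,\nu}(I)\mu(I)\le C\sum_{J\in\mathbf{Tail}_I}\alpha_{\mu,\nu}(J)\mu(J)+\kappa\sum_{J\in\mathbf{Tail}_I}\Delta_{\mu,\nu}(J)\mu(J)+4\mu(\mathbf{Tip}_I).$$
   Context: $\mathcal{D}$: dyadic intervals $[j2^{-k},(j+1)2^{-k})\subset[0,1)$, $k\ge0$; $I_-,I_+$ are the left and right halves of $I$. For $I\in\mathcal{D}$ set $I_{0-}=I_{0+}=I$, $I_{k-}:=(I_{(k-1)-})_-$, $I_{k+}:=(I_{(k-1)+})_+$ for $k\ge1$. Admissible pairs: $N_1,N_2\in\{0,1,2,\ldots\}\cup\{\infty\}$, or the special pair $(N_1,N_2)=(0,-1)$. For $N_1,N_2\ge0$: $\mathbf{Tail}_I$ consists of $I_{k-}$ for $0\le k\le N_1$ and $(I_-)_{k+}$ for $0\le k\le N_2$ (finite $k$ only), and $\mathbf{Tip}_I := I_{(N_1+1)-}\cup(I_-)_{(N_2+1)+}$, where a component with $N_i=\infty$ is omitted. For the special pair, $\mathbf{Tail}_I=\{I\}$ and $\mathbf{Tip}_I=I_-$. $\Delta_{\mu,\nu}(J):=|\mu(J_-)/\mu(J)-\nu(J_-)/\nu(J)|$,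 with $\Delta_{\mu,\nu}(J)\mu(J):=0$ if $\mu(J)=0$. Wasserstein distance: $\mathbb{W}_1(\nu_1,\nu_2) := \sup_\psi |\int\psi\,d\nu_1 - \int\psi\,d\nu_2|$ over all $1$-Lipschitz $\psi\colon\mathbb{R}\to\mathbb{R}$ supported on $[0,1]$. $T_J$ is the increasing affine map from $\overline J$ onto $[0,1]$, $\mu_J := T_{J\sharp}(\mu|_J)/\mu(J)$, $\nu_J := T_{J\sharp}(\nu|_J)/\nu(J)$ (zero if the mass vanishes), $\alpha_{\mu,\nu}(J) := \mathbb{W}_1(\mu_J,\nu_J)$. *)

theory Defs
  imports "HOL-Probability.Probability"
begin

text \<open>Dyadic intervals are indexed by pairs (k, j) with j < 2^k;
  the interval is [j 2^-k, (j+1) 2^-k).\<close>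

type_synonym dyidx = "nat \<times> nat"

definition is_dyadic :: "dyidx \<Rightarrow> bool" where
  "is_dyadic I \<longleftrightarrow> snd I < 2 ^ fst I"

definition dyad :: "dyidx \<Rightarrow> real set" where
  "dyad I = {real (snd I) / 2 ^ fst I ..< (real (snd I) + 1) / 2 ^ fst I}"

definition dleft :: "dyidx \<Rightarrow> dyidx" where
  "dleft I = (Suc (fst I), 2 * snd I)"

definition dright :: "dyidx \<Rightarrow> dyidx" where
  "dright I = (Suc (fst I), 2 * snd I + 1)"

text \<open>Admissible pairs: (N1, N2) with N1, N2 in nat \<union> {\<infinity>}, or the special pair (0,-1).\<close>

datatype adm_pair = Reg enat enat | Special

definition Tail :: "adm_pair \<Rightarrow> dyidx \<Rightarrow> dyidx set" where
  "Tail p I = (case p of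
      Reg N1 N2 \<Rightarrow> {(dleft ^^ n) I | n. enat n \<le> N1}
                   \<union> {(dright ^^ n) (dleft I) | n. enat n \<le> N2}
    | Special \<Rightarrow> {I})"

definition Tip :: "adm_pair \<Rightarrow> dyidx \<Rightarrow> real set" where
  "Tip p I = (case p of
      Reg N1 N2 \<Rightarrow>
        (if N1 = \<infinity> then {} else dyad ((dleft ^^ (the_enat N1 + 1)) I))
        \<union> (if N2 = \<infinity> then {} else dyad ((dright ^^ (the_enat N2 + 1)) (dleft I)))
    | Special \<Rightarrow> dyad (dleft I))"

definition Delta :: "real measure \<Rightarrow> real measure \<Rightarrow> dyidx \<Rightarrow> real" where
  "Delta \<mu> \<nu> J = \<bar>measure \<mu> (dyad (dleft J)) / measure \<mu> (dyad J)
                    - measure \<nu> (dyad (dleft J)) / measure \<nu> (dyad J)\<bar>"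

definition Delta_mass :: "real measure \<Rightarrow> real measure \<Rightarrow> dyidx \<Rightarrow> real" where
  "Delta_mass \<mu> \<nu> J = (if measure \<mu> (dyad J) = 0 then 0 else Delta \<mu> \<nu> J * measure \<mu> (dyad J))"

definition W1 :: "real measure \<Rightarrow> real measure \<Rightarrow> real" where
  "W1 \<nu>1 \<nu>2 = Sup {\<bar>(\<integral>x. \<psi> x \<partial>\<nu>1) - (\<integral>x. \<psi> x \<partial>\<nu>2)\<bar> | \<psi>.
       lipschitz_on 1 UNIV \<psi> \<and> (\<forall>x. x \<notin> {0..1} \<longrightarrow> \<psi> x = 0)}"

definition Tmap :: "dyidx \<Rightarrow> real \<Rightarrow> real" where
  "Tmap J x = 2 ^ fst J * x - real (snd J)"

definition normalized :: "real measure \<Rightarrow> dyidx \<Rightarrow> real measure" where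
  "normalized \<mu> J = (if measure \<mu> (dyad J) = 0 then null_measure borel
     else scale_measure (ennreal (1 / measure \<mu> (dyad J)))
            (distr (restrict_space \<mu> (dyad J)) borel (Tmap J)))"

definition alpha :: "real measure \<Rightarrow> real measure \<Rightarrow> dyidx \<Rightarrow> real" where
  "alpha \<mu> \<nu> J = W1 (normalized \<mu> J) (normalized \<nu> J)"

definition borel_prob_01 :: "real measure \<Rightarrow> bool" where
  "borel_prob_01 \<mu> \<longleftrightarrow> prob_space \<mu> \<and> sets \<mu> = sets borel \<and> emeasure \<mu> {0..<1} = 1"

definition dyadically_doubling :: "real measure \<Rightarrow> real \<Rightarrow> bool" where
  "dyadically_doubling \<nu> D \<longleftrightarrow> (\<forall>I. is_dyadic I \<longrightarrow>
      measure \<nu> (dyad I) \<le> D * measure \<nu> (dyad (dleft I)) \<and>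
      measure \<nu> (dyad I) \<le> D * measure \<nu> (dyad (dright I)))"

end

theory Submission
  imports Defs
begin


lemma dyad_borel[measurable]: "dyad J \<in> sets borel"
  by (simp add: dyad_def)

lemma mem_dyad: "x \<in> dyad J \<longleftrightarrow> 0 \<le> Tmap J x \<and> Tmap J x < 1"
  by (cases J) (simp add: dyad_def Tmap_def field_simps)

lemma Tmap_dleft: "Tmap (dleft J) x = 2 * Tmap J x"
  by (cases J) (simp add: dleft_def Tmap_def algebra_simps)

lemma Tmap_dright: "Tmap (dright J) x = 2 * Tmap J x - 1"
  by (cases J) (simp add: dright_def Tmap_def algebra_simps)

lemma Tmap_dleft_pow: "Tmap ((dleft ^^ k) J) x = 2 ^ k * Tmap J x"
  by (induction k) (simp_all add: Tmap_dleft)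

lemma Tmap_dright_pow: "Tmap ((dright ^^ k) J) x = 2 ^ k * Tmap J x - (2 ^ k - 1)"
  by (induction k) (simp_all add: Tmap_dright algebra_simps)

lemma dyadic_dleft: "is_dyadic J \<Longrightarrow> is_dyadic (dleft J)"
  by (cases J) (auto simp: is_dyadic_def dleft_def)

lemma dyadic_dright: "is_dyadic J \<Longrightarrow> is_dyadic (dright J)"
  by (cases J) (auto simp: is_dyadic_def dright_def)

lemma dyad_split: "dyad J = dyad (dleft J) \<union> dyad (dright J)"
  by (auto simp: mem_dyad Tmap_dleft Tmap_dright)

lemma dyad_disj: "dyad (dleft J) \<inter> dyad (dright J) = {}"
  by (auto simp: mem_dyad Tmap_dleft Tmap_dright)

lemma dyad_dleft_sub: "dyad (dleft J) \<subseteq> dyad J"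
  using dyad_split by blast

lemma borel_prob_finite: "borel_prob_01 \<mu> \<Longrightarrow> finite_measure \<mu>"
  unfolding borel_prob_01_def using prob_space.finite_measure by blast

lemma measure_split:
  assumes "borel_prob_01 \<mu>"
  shows "measure \<mu> (dyad J) = measure \<mu> (dyad (dleft J)) + measure \<mu> (dyad (dright J))"
proof -
  interpret finite_measure \<mu> using borel_prob_finite[OF assms] .
  have s: "sets \<mu> = sets borel" using assms by (simp add: borel_prob_01_def)
  show ?thesis
    by (subst dyad_split) (rule finite_measure_Union, auto simp: s dyad_disj)
qed

lemma sets_bp: "borel_prob_01 \<mu> \<Longrightarrow> sets \<mu> = sets borel"
  by (simp add: borel_prob_01_def)

lemma measure_root: assumes "borel_prob_01 \<nu>" shows "measure \<nu> (dyad (0,0)) = 1"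
proof -
  have "dyad (0,0) = {0..<1}" by (simp add: dyad_def)
  moreover have "emeasure \<nu> {0..<1} = 1" using assms by (simp add: borel_prob_01_def)
  ultimately show ?thesis by (simp add: measure_def)
qed

lemma measure_le1: assumes "borel_prob_01 \<nu>" shows "measure \<nu> A \<le> 1"
  using assms unfolding borel_prob_01_def using prob_space.prob_le_1 by blast

lemma D_ge1:
  assumes "borel_prob_01 \<nu>" "dyadically_doubling \<nu> D"
  shows "D \<ge> 1"
proof -
  have d: "is_dyadic (0,0)" by (simp add: is_dyadic_def)
  have "1 \<le> D * measure \<nu> (dyad (dright (0,0)))"
    using assms(2) d measure_root[OF assms(1)] unfolding dyadically_doubling_def by metis
  moreover have "measure \<nu> (dyad (dright (0,0))) \<le> 1" by (rule measure_le1[OF assms(1)])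
  moreover have "measure \<nu> (dyad (dright (0,0))) \<ge> 0" by simp
  ultimately show ?thesis
  proof -
    assume h1: "1 \<le> D * measure \<nu> (dyad (dright (0,0)))" and h2: "measure \<nu> (dyad (dright (0,0))) \<le> 1"
      and h3: "measure \<nu> (dyad (dright (0,0))) \<ge> 0"
    show "D \<ge> 1"
    proof (rule ccontr)
      assume "\<not> 1 \<le> D"
      have "D * measure \<nu> (dyad (dright (0,0))) < 1"
      proof (cases "D \<le> 0")
        case True then show ?thesis using h3 mult_nonpos_nonneg[of D] by (smt (verit))
      next
        case False
        then have "D * measure \<nu> (dyad (dright (0,0))) \<le> D * 1" using h2 by (intro mult_left_mono) auto
        then show ?thesis using \<open>\<not> 1 \<le> D\<close> by simp
      qed
      then show False using h1 by simp
    qed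
  qed
qed

lemma nu_pos:
  assumes "borel_prob_01 \<nu>" "dyadically_doubling \<nu> D"
  shows "is_dyadic J \<Longrightarrow> measure \<nu> (dyad J) > 0"
proof -
  have D: "D > 0" using D_ge1[OF assms] by simp
  have "\<forall>j. j < 2 ^ n \<longrightarrow> measure \<nu> (dyad (n, j)) > 0" for n
  proof (induction n)
    case 0
    then show ?case using measure_root[OF assms(1)] by simp
  next
    case (Suc n)
    show ?case
    proof (intro allI impI)
      fix j :: nat assume j: "j < 2 ^ Suc n"
      define p where "p = (n, j div 2)"
      have pd: "is_dyadic p" using j by (simp add: p_def is_dyadic_def less_mult_imp_div_less)
      have pp: "measure \<nu> (dyad p) > 0" using Suc pd by (simp add: p_def is_dyadic_def)
      have ch: "(Suc n, j) = dleft p \<or> (Suc n, j) = dright p"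
        by (cases "even j") (auto simp: p_def dleft_def dright_def elim!: evenE oddE)
      have "measure \<nu> (dyad p) \<le> D * measure \<nu> (dyad (Suc n, j))"
        using assms(2) pd ch unfolding dyadically_doubling_def by metis
      then have "D * measure \<nu> (dyad (Suc n, j)) > 0" using pp by linarith
      then show "measure \<nu> (dyad (Suc n, j)) > 0" using D by (simp add: zero_less_mult_iff)
    qed
  qed
  then show "is_dyadic J \<Longrightarrow> measure \<nu> (dyad J) > 0"
    by (cases J) (simp add: is_dyadic_def)
qed

lemma dyadic_dleft_pow: "is_dyadic J \<Longrightarrow> is_dyadic ((dleft ^^ k) J)"
  by (induction k) (simp_all add: dyadic_dleft)

lemma dyadic_dright_pow: "is_dyadic J \<Longrightarrow> is_dyadic ((dright ^^ k) J)"
  by (induction k) (simp_all add: dyadic_dright)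

lemma decay_step:
  assumes "borel_prob_01 \<nu>" "dyadically_doubling \<nu> D" "is_dyadic K"
  shows "measure \<nu> (dyad (dleft K)) \<le> (1 - 1/D) * measure \<nu> (dyad K)"
    and "measure \<nu> (dyad (dright K)) \<le> (1 - 1/D) * measure \<nu> (dyad K)"
proof -
  have D: "D \<ge> 1" using D_ge1[OF assms(1,2)] .
  have sp: "measure \<nu> (dyad K) = measure \<nu> (dyad (dleft K)) + measure \<nu> (dyad (dright K))"
    by (rule measure_split[OF assms(1)])
  have d1: "measure \<nu> (dyad K) \<le> D * measure \<nu> (dyad (dleft K))"
   and d2: "measure \<nu> (dyad K) \<le> D * measure \<nu> (dyad (dright K))"
    using assms(2,3) unfolding dyadically_doubling_def by blast+
  have e: "(1 - 1/D) * x = x - x / D" for x by (simp add: algebra_simps)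
  from d2 D have "measure \<nu> (dyad K) / D \<le> measure \<nu> (dyad (dright K))"
    by (simp add: divide_le_eq mult.commute)
  then show "measure \<nu> (dyad (dleft K)) \<le> (1 - 1/D) * measure \<nu> (dyad K)"
    using sp by (simp add: e)
  from d1 D have "measure \<nu> (dyad K) / D \<le> measure \<nu> (dyad (dleft K))"
    by (simp add: divide_le_eq mult.commute)
  then show "measure \<nu> (dyad (dright K)) \<le> (1 - 1/D) * measure \<nu> (dyad K)"
    using sp by (simp add: e)
qed

lemma decay:
  assumes "borel_prob_01 \<nu>" "dyadically_doubling \<nu> D" "is_dyadic J"
  shows "measure \<nu> (dyad ((dleft ^^ k) J)) \<le> (1 - 1/D) ^ k * measure \<nu> (dyad J)"
    and "measure \<nu> (dyad ((dright ^^ k) J)) \<le> (1 - 1/D) ^ k * measure \<nu> (dyad J)"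
proof -
  have D: "D \<ge> 1" using D_ge1[OF assms(1,2)] .
  then have t: "0 \<le> 1 - 1/D" by (simp add: divide_le_eq)
  show "measure \<nu> (dyad ((dleft ^^ k) J)) \<le> (1 - 1/D) ^ k * measure \<nu> (dyad J)"
  proof (induction k)
    case (Suc k)
    have "measure \<nu> (dyad ((dleft ^^ Suc k) J)) \<le> (1 - 1/D) * measure \<nu> (dyad ((dleft ^^ k) J))"
      using decay_step(1)[OF assms(1,2) dyadic_dleft_pow[OF assms(3)]] by simp
    also have "\<dots> \<le> (1 - 1/D) * ((1 - 1/D) ^ k * measure \<nu> (dyad J))"
      using Suc t by (rule mult_left_mono)
    finally show ?case by simp
  qed simp
  show "measure \<nu> (dyad ((dright ^^ k) J)) \<le> (1 - 1/D) ^ k * measure \<nu> (dyad J)"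
  proof (induction k)
    case (Suc k)
    have "measure \<nu> (dyad ((dright ^^ Suc k) J)) \<le> (1 - 1/D) * measure \<nu> (dyad ((dright ^^ k) J))"
      using decay_step(2)[OF assms(1,2) dyadic_dright_pow[OF assms(3)]] by simp
    also have "\<dots> \<le> (1 - 1/D) * ((1 - 1/D) ^ k * measure \<nu> (dyad J))"
      using Suc t by (rule mult_left_mono)
    finally show ?case by simp
  qed simp
qed

lemma Tmap_meas[measurable]: "Tmap J \<in> borel_measurable borel"
  unfolding Tmap_def by measurable

lemma integral_normalized:
  assumes sets: "sets \<mu> = sets borel" and fin: "finite_measure \<mu>"
    and pos: "measure \<mu> (dyad J) > 0" and f[measurable]: "f \<in> borel_measurable borel"
  shows "(\<integral>x. f x \<partial>normalized \<mu> J) = (\<integral>t. indicator (dyad J) t * f (Tmap J t) \<partial>\<mu>) / measure \<mu> (dyad J)"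
proof -
  define m where "m = measure \<mu> (dyad J)"
  define N where "N = distr (restrict_space \<mu> (dyad J)) borel (Tmap J)"
  have Tm: "Tmap J \<in> measurable (restrict_space \<mu> (dyad J)) borel"
    by (rule measurable_restrict_space1) (simp add: measurable_cong_sets[OF sets refl])
  have eq: "normalized \<mu> J = density N (\<lambda>_. ennreal (1/m))"
    unfolding normalized_def using pos
    by (intro measure_eqI) (auto simp: m_def N_def emeasure_density_const)
  have "(\<integral>x. f x \<partial>normalized \<mu> J) = (\<integral>x. (1/m) *\<^sub>R f x \<partial>N)"
    unfolding eq by (rule integral_density) (auto simp: N_def m_def)
  also have "\<dots> = (1/m) * (\<integral>x. f x \<partial>N)" by simp
  also have "(\<integral>x. f x \<partial>N) = (\<integral>t. f (Tmap J t) \<partial>restrict_space \<mu> (dyad J))"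
    unfolding N_def by (rule integral_distr[OF Tm f])
  also have "\<dots> = (\<integral>t. indicator (dyad J) t *\<^sub>R f (Tmap J t) \<partial>\<mu>)"
    by (rule integral_restrict_space) (simp add: sets_eq_imp_space_eq[OF sets] sets)
  finally show ?thesis by (simp add: m_def)
qed


lemma legit_bound:
  fixes \<psi> :: "real \<Rightarrow> real"
  assumes "lipschitz_on 1 UNIV \<psi>" "\<forall>x. x \<notin> {0..1} \<longrightarrow> \<psi> x = 0"
  shows "\<bar>\<psi> x\<bar> \<le> 2"
proof (cases "x \<in> {0..1}")
  case True
  have "dist (\<psi> x) (\<psi> (-1)) \<le> 1 * dist x (-1)" by (rule lipschitz_onD[OF assms(1)]) auto
  moreover have "\<psi> (-1) = 0" using assms(2) by auto
  ultimately show ?thesis using True by (simp add: dist_real_def)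
next
  case False then show ?thesis using assms(2) by simp
qed

lemma legit_meas: "lipschitz_on C UNIV (\<psi>::real\<Rightarrow>real) \<Longrightarrow> \<psi> \<in> borel_measurable borel"
  by (rule borel_measurable_continuous_onI, rule lipschitz_on_continuous_on)

lemma int_ind_bound:
  fixes f :: "real \<Rightarrow> real"
  assumes "borel_prob_01 \<mu>" and f: "f \<in> borel_measurable borel" and B: "\<And>x. \<bar>f x\<bar> \<le> B"
    and A: "A \<in> sets borel"
  shows "integrable \<mu> (\<lambda>t. indicator A t * f t)"
    and "\<bar>\<integral>t. indicator A t * f t \<partial>\<mu>\<bar> \<le> B * measure \<mu> A"
proof -
  interpret finite_measure \<mu> using borel_prob_finite[OF assms(1)] .
  have s: "sets \<mu> = sets borel" using sets_bp[OF assms(1)] .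
  have m: "(\<lambda>t. indicator A t * f t) \<in> borel_measurable \<mu>"
    using f A by (simp add: measurable_cong_sets[OF s refl])
  have B0: "0 \<le> B" using B[of 0] by linarith
  show i: "integrable \<mu> (\<lambda>t. indicator A t * f t)"
    by (rule integrable_const_bound[where B=B]) (use B B0 m in \<open>auto simp: indicator_def\<close>)
  have fin: "emeasure \<mu> A < \<top>" by (metis emeasure_finite less_top)
  have Ai: "integrable \<mu> (\<lambda>t. indicator A t * B)"
    using A s by (intro integrable_mult_left) (simp add: integrable_indicator_iff measurable_cong_sets[OF s refl] fin)
  have "\<bar>\<integral>t. indicator A t * f t \<partial>\<mu>\<bar> \<le> (\<integral>t. \<bar>indicator A t * f t\<bar> \<partial>\<mu>)"
    by (rule integral_abs_bound)
  also have "\<dots> \<le> (\<integral>t. indicator A t * B \<partial>\<mu>)"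
    by (rule integral_mono') (use Ai B B0 in \<open>auto simp: indicator_def abs_mult\<close>)
  also have "\<dots> = B * measure \<mu> A"
    using A s by (simp add: measurable_cong_sets[OF s refl])
  finally show "\<bar>\<integral>t. indicator A t * f t \<partial>\<mu>\<bar> \<le> B * measure \<mu> A" .
qed

lemma normalized_bound:
  fixes \<psi> :: "real \<Rightarrow> real"
  assumes "borel_prob_01 \<mu>" "lipschitz_on 1 UNIV \<psi>" "\<forall>x. x \<notin> {0..1} \<longrightarrow> \<psi> x = 0"
  shows "\<bar>\<integral>x. \<psi> x \<partial>normalized \<mu> J\<bar> \<le> 2"
proof (cases "measure \<mu> (dyad J) = 0")
  case True then show ?thesis by (simp add: normalized_def)
next
  case False
  then have pos: "measure \<mu> (dyad J) > 0" by (simp add: order_neq_le_trans)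
  have f: "(\<lambda>t. \<psi> (Tmap J t)) \<in> borel_measurable borel"
    using legit_meas[OF assms(2)] by measurable
  have "\<bar>\<integral>t. indicator (dyad J) t * \<psi> (Tmap J t) \<partial>\<mu>\<bar> \<le> 2 * measure \<mu> (dyad J)"
    by (rule int_ind_bound(2)[OF assms(1) f]) (use legit_bound[OF assms(2,3)] in auto)
  then show ?thesis
    using pos by (simp add: integral_normalized[OF sets_bp[OF assms(1)] borel_prob_finite[OF assms(1)] pos
          legit_meas[OF assms(2)]] divide_le_eq)
qed

lemma W1_ge:
  fixes \<psi> :: "real \<Rightarrow> real"
  assumes "borel_prob_01 \<mu>" "borel_prob_01 \<nu>" "lipschitz_on 1 UNIV \<psi>" "\<forall>x. x \<notin> {0..1} \<longrightarrow> \<psi> x = 0"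
  shows "\<bar>(\<integral>x. \<psi> x \<partial>normalized \<mu> J) - (\<integral>x. \<psi> x \<partial>normalized \<nu> J)\<bar> \<le> alpha \<mu> \<nu> J"
proof -
  let ?S = "{\<bar>(\<integral>x. \<psi> x \<partial>normalized \<mu> J) - (\<integral>x. \<psi> x \<partial>normalized \<nu> J)\<bar> | \<psi>.
       lipschitz_on 1 UNIV (\<psi>::real\<Rightarrow>real) \<and> (\<forall>x. x \<notin> {0..1} \<longrightarrow> \<psi> x = 0)}"
  have b: "bdd_above ?S"
  proof (rule bdd_aboveI)
    fix y :: real assume "y \<in> ?S"
    then obtain \<phi> :: "real \<Rightarrow> real" where y: "y = \<bar>(\<integral>x. \<phi> x \<partial>normalized \<mu> J) - (\<integral>x. \<phi> x \<partial>normalized \<nu> J)\<bar>"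
      and l: "lipschitz_on 1 UNIV \<phi>" "\<forall>x. x \<notin> {0..1} \<longrightarrow> \<phi> x = 0" by blast
    show "y \<le> 4" using normalized_bound[OF assms(1) l, of J] normalized_bound[OF assms(2) l, of J] y
      by linarith
  qed
  have m: "\<bar>(\<integral>x. \<psi> x \<partial>normalized \<mu> J) - (\<integral>x. \<psi> x \<partial>normalized \<nu> J)\<bar> \<in> ?S"
    using assms(3,4) by blast
  show ?thesis unfolding alpha_def W1_def using cSup_upper[OF m b] .
qed

lemma alpha_nonneg:
  assumes "borel_prob_01 \<mu>" "borel_prob_01 \<nu>"
  shows "alpha \<mu> \<nu> J \<ge> 0"
proof -
  have "lipschitz_on 1 UNIV (\<lambda>x::real. 0::real)" by (rule lipschitz_onI) auto
  from W1_ge[OF assms this] show ?thesis by simp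
qed

lemma alg_common:
  fixes m n ml nl Gm Gn A L :: real
  assumes m: "m > 0" and n: "n > 0" and nl: "nl > 0" and L: "L > 0"
    and Gn: "Gn \<ge> nl / (2*L)"
  shows "1 / (Gn / nl) \<le> 2 * L" and "Gn / nl > 0"
proof -
  have x: "1 / (2*L) \<le> Gn / nl" using Gn nl by (simp add: le_divide_eq)
  have "1/(2*L) > 0" using L by simp
  then show xp: "Gn / nl > 0" using x by linarith
  have h: "1 \<le> Gn / nl * (2*L)" using x L by (simp add: divide_le_eq)
  show "1 / (Gn / nl) \<le> 2 * L"
    using h xp by (simp only: divide_le_eq) (simp add: mult.assoc mult.left_commute mult.commute)
qed
lemma alg_reg:
  fixes m n ml nl Gm Gn A B L :: real
  assumes m: "m > 0" and n: "n > 0" and ml: "ml \<ge> 0" and nl: "nl > 0" and L: "L > 0"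
    and Gm0: "0 \<le> Gm" and Gm1: "Gm \<le> ml / L" and Gn: "Gn \<ge> nl / (2*L)"
    and hA: "\<bar>Gm/m - Gn/n\<bar> \<le> 2*A"
    and hB: "ml > 0 \<Longrightarrow> \<bar>Gm/ml - Gn/nl\<bar> \<le> B" and B: "B \<ge> 0"
  shows "\<bar>ml/m - nl/n\<bar> * m \<le> 4*L*A*m + 2*L*B*ml"
proof -
  define a where "a = ml/m"
  define b where "b = nl/n"
  define x where "x = Gn/nl"
  have ix: "1 / x \<le> 2*L" and xp: "x > 0" using alg_common[OF m n nl L Gn] by (simp_all add: a_def b_def x_def)
  have a0: "a \<ge> 0" using ml m by (simp add: a_def)
  have bx: "b * x = Gn / n" using nl by (simp add: b_def x_def)
  have key: "\<bar>(a - b) * x\<bar> \<le> 2*A + a*B"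
  proof (cases "ml = 0")
    case True
    then have "Gm = 0" "a = 0" using Gm0 Gm1 by (simp_all add: a_def)
    then show ?thesis using hA bx by (simp add: algebra_simps)
  next
    case False
    then have mlp: "ml > 0" using ml by simp
    have e: "(a - b) * x = (Gm/m - Gn/n) + a * (x - Gm/ml)"
      using mlp m by (simp add: a_def algebra_simps bx[symmetric])
    have "\<bar>a * (x - Gm/ml)\<bar> \<le> a * B"
      using hB[OF mlp] a0 by (simp add: abs_mult abs_minus_commute x_def mult_left_mono)
    then show ?thesis unfolding e using hA by linarith
  qed
  have "\<bar>a - b\<bar> = \<bar>(a - b) * x\<bar> * (1 / x)" using xp by (simp add: abs_mult)
  also have "\<dots> \<le> (2*A + a*B) * (2*L)"
    by (rule mult_mono[OF key ix]) (use xp hA a0 B in \<open>auto intro: add_nonneg_nonneg mult_nonneg_nonneg\<close>)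
  finally have "\<bar>a - b\<bar> * m \<le> (2*A + a*B) * (2*L) * m" using m by (simp add: mult_right_mono)
  also have "\<dots> = 4*L*A*m + 2*L*B*ml" using m by (simp add: a_def algebra_simps)
  finally show ?thesis by (simp add: a_def b_def)
qed

lemma alg_sp:
  fixes m n ml nl Gm Gn A L :: real
  assumes m: "m > 0" and n: "n > 0" and ml: "ml \<ge> 0" and nl: "nl > 0" and L: "L > 0"
    and Gm0: "0 \<le> Gm" and Gm1: "Gm \<le> ml / L" and Gn: "Gn \<ge> nl / (2*L)"
    and hA: "\<bar>Gm/m - Gn/n\<bar> \<le> 2*A"
  shows "\<bar>ml/m - nl/n\<bar> * m \<le> 4*L*A*m + 2*ml"
proof -
  define a where "a = ml/m"
  define b where "b = nl/n"
  define x where "x = Gn/nl"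
  have ix: "1 / x \<le> 2*L" and xp: "x > 0" using alg_common[OF m n nl L Gn] by (simp_all add: a_def b_def x_def)
  have a0: "a \<ge> 0" using ml m by (simp add: a_def)
  have am: "a * m = ml" using m by (simp add: a_def)
  have bx: "b * x = Gn / n" using nl by (simp add: b_def x_def)
  show ?thesis
  proof (cases "b \<le> a")
    case True
    have b0: "b \<ge> 0" using nl n by (simp add: b_def)
    then have "\<bar>a - b\<bar> * m \<le> a * m" using m True by (simp add: mult_right_mono)
    moreover have "0 \<le> A" using hA by linarith
    ultimately show ?thesis using am m L ml by (simp add: a_def b_def) (smt (verit) mult_nonneg_nonneg mult_pos_pos)
  next
    case False
    have GmA: "Gm / m \<le> a / L" using Gm1 m L by (simp add: a_def divide_right_mono field_simps)
    have "(b - a) * x = (Gn/n - Gm/m) + (Gm/m - a * x)" using bx by (simp add: algebra_simps)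
    also have "\<dots> \<le> 2*A + a / L" using hA GmA a0 xp by (smt (verit) mult_nonneg_nonneg)
    finally have k: "(b - a) * x \<le> 2*A + a / L" .
    have "b - a = (b - a) * x * (1 / x)" using xp by simp
    also have "\<dots> \<le> (2*A + a / L) * (2*L)"
      by (rule mult_mono[OF k ix]) (use xp False hA a0 L in \<open>auto intro: add_nonneg_nonneg\<close>)
    also have "\<dots> = 4*L*A + 2*a" using L by (simp add: algebra_simps)
    finally have "\<bar>a - b\<bar> \<le> 4*L*A + 2*a" using False by simp
    then have "\<bar>a - b\<bar> * m \<le> (4*L*A + 2*a) * m" using m by (simp add: mult_right_mono)
    then show ?thesis using am m by (simp add: a_def b_def algebra_simps)
  qed
qed





lemma core:
  assumes bm: "borel_prob_01 \<mu>" and bn: "borel_prob_01 \<nu>" and dd: "dyadically_doubling \<nu> D"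
    and dy: "is_dyadic I" and kk: "(1 - 1/D) ^ k \<le> 1/4" and mpos: "measure \<mu> (dyad I) > 0"
  shows "Delta_mass \<mu> \<nu> I \<le> 4*2^k*alpha \<mu> \<nu> I * measure \<mu> (dyad I)
            + 2*2^k*alpha \<mu> \<nu> (dleft I) * measure \<mu> (dyad (dleft I))"
    and "Delta_mass \<mu> \<nu> I \<le> 4*2^k*alpha \<mu> \<nu> I * measure \<mu> (dyad I)
            + 2*measure \<mu> (dyad (dleft I))"
proof -
  define L :: real where "L = 2 ^ k"
  have L: "L > 0" by (simp add: L_def)
  define c where "c = 1 / L"
  have c: "c > 0" using L by (simp add: c_def)
  define Il where "Il = dleft I"
  have dyl: "is_dyadic Il" using dy by (simp add: Il_def dyadic_dleft)
  define \<psi>1 :: "real \<Rightarrow> real" where "\<psi>1 y = max 0 (min c (min y (1 - y)))" for y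
  define \<psi>0 :: "real \<Rightarrow> real" where "\<psi>0 x = max 0 (min (c/2) (min x (1/2 - x)))" for x
  have lip1: "lipschitz_on 1 UNIV \<psi>1"
    by (rule lipschitz_onI) (auto simp: dist_real_def \<psi>1_def max_def min_def)
  have lip0: "lipschitz_on 1 UNIV \<psi>0"
    by (rule lipschitz_onI) (auto simp: dist_real_def \<psi>0_def max_def min_def)
  have z1: "\<forall>x. x \<notin> {0..1} \<longrightarrow> \<psi>1 x = 0" by (auto simp: \<psi>1_def)
  have z0: "\<forall>x. x \<notin> {0..1} \<longrightarrow> \<psi>0 x = 0" by (auto simp: \<psi>0_def)
  have m1[measurable]: "\<psi>1 \<in> borel_measurable borel" using legit_meas[OF lip1] .
  have m0[measurable]: "\<psi>0 \<in> borel_measurable borel" using legit_meas[OF lip0] .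
  have b1: "\<bar>\<psi>1 y\<bar> \<le> c" for y using c by (simp add: \<psi>1_def)
  have p1: "\<psi>1 y \<ge> 0" for y by (simp add: \<psi>1_def)
  have pw: "indicator (dyad I) t * \<psi>0 (Tmap I t) = indicator (dyad Il) t * \<psi>1 (Tmap Il t) / 2" for t
  proof -
    have "\<psi>0 (Tmap I t) = \<psi>1 (Tmap Il t) / 2"
      by (simp add: \<psi>0_def \<psi>1_def Il_def Tmap_dleft max_def min_def)
    moreover have "t \<in> dyad I \<Longrightarrow> t \<notin> dyad Il \<Longrightarrow> \<psi>1 (Tmap Il t) = 0"
      by (auto simp: mem_dyad Il_def Tmap_dleft \<psi>1_def)
    moreover have "t \<in> dyad Il \<Longrightarrow> t \<in> dyad I" using dyad_dleft_sub[of I] by (auto simp: Il_def)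
    ultimately show ?thesis by (auto simp: indicator_def)
  qed
  define G where "G M = (\<integral>t. indicator (dyad Il) t * \<psi>1 (Tmap Il t) \<partial>M)" for M
  have fmeas: "(\<lambda>t. \<psi>1 (Tmap Il t)) \<in> borel_measurable borel" by measurable
  have int0: "(\<integral>x. \<psi>0 x \<partial>normalized M I) = G M / (2 * measure M (dyad I))"
    if "borel_prob_01 M" "measure M (dyad I) > 0" for M
  proof -
    have "(\<integral>x. \<psi>0 x \<partial>normalized M I) = (\<integral>t. indicator (dyad I) t * \<psi>0 (Tmap I t) \<partial>M) / measure M (dyad I)"
      by (rule integral_normalized[OF sets_bp[OF that(1)] borel_prob_finite[OF that(1)] that(2) m0])
    also have "(\<integral>t. indicator (dyad I) t * \<psi>0 (Tmap I t) \<partial>M) = G M / 2"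
      by (simp add: pw G_def)
    finally show ?thesis by simp
  qed
  have int1: "(\<integral>x. \<psi>1 x \<partial>normalized M Il) = G M / measure M (dyad Il)"
    if "borel_prob_01 M" "measure M (dyad Il) > 0" for M
    unfolding G_def
    by (rule integral_normalized[OF sets_bp[OF that(1)] borel_prob_finite[OF that(1)] that(2) m1])
  have Gb: "\<bar>G M\<bar> \<le> c * measure M (dyad Il)" and Gi: "integrable M (\<lambda>t. indicator (dyad Il) t * \<psi>1 (Tmap Il t))"
    if "borel_prob_01 M" for M
    using int_ind_bound[OF that fmeas b1] by (auto simp: G_def)
  have G0: "G M \<ge> 0" for M unfolding G_def using p1 by (intro integral_nonneg_AE AE_I2) simp
  have npos: "measure \<nu> (dyad I) > 0" using nu_pos[OF bn dd dy] .
  have nlpos: "measure \<nu> (dyad Il) > 0" using nu_pos[OF bn dd dyl] .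
  define Mid where "Mid = dyad Il - dyad ((dleft ^^ k) Il) - dyad ((dright ^^ k) Il)"
  have Midb[measurable]: "Mid \<in> sets borel" by (simp add: Mid_def)
  have midpt: "\<psi>1 (Tmap Il t) = c" if "t \<in> Mid" for t
  proof -
    define T where "T = Tmap Il t"
    have T: "0 \<le> T" "T < 1" using that by (auto simp: Mid_def mem_dyad T_def)
    have n1: "\<not> (0 \<le> L * T \<and> L * T < 1)" using that
      by (auto simp: Mid_def mem_dyad T_def Tmap_dleft_pow L_def)
    have n2: "\<not> (0 \<le> L * T - (L - 1) \<and> L * T - (L - 1) < 1)" using that
      by (auto simp: Mid_def mem_dyad T_def Tmap_dright_pow L_def)
    have "L * T \<ge> 0" using L T by simp
    then have LT: "L * T \<ge> 1" using n1 by linarith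
    have "L * T < L * 1" using L T by (intro mult_strict_left_mono) auto
    then have "L * T - (L - 1) < 1" by simp
    then have LT2: "L * (1 - T) > 1" using n2 by (simp add: algebra_simps)
    have "c \<le> T" using LT L by (simp add: c_def divide_le_eq mult.commute)
    moreover have "c < 1 - T" using LT2 L by (simp add: c_def divide_less_eq mult.commute)
    ultimately show ?thesis using c by (simp add: \<psi>1_def T_def)
  qed
  have Gn1: "G \<nu> \<ge> c * measure \<nu> Mid"
  proof -
    interpret finite_measure \<nu> using borel_prob_finite[OF bn] .
    have s: "sets \<nu> = sets borel" using sets_bp[OF bn] .
    have fin: "emeasure \<nu> Mid < \<top>" by (metis emeasure_finite less_top)
    have ii: "integrable \<nu> (\<lambda>t. indicator Mid t * c)"
      by (intro integrable_mult_left) (simp add: integrable_indicator_iff s sets_eq_imp_space_eq[OF s] fin)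
    have "c * measure \<nu> Mid = (\<integral>t. indicator Mid t * c \<partial>\<nu>)"
      by (simp add: s sets_eq_imp_space_eq[OF s])
    also have "\<dots> \<le> G \<nu>" unfolding G_def
      by (rule integral_mono[OF ii Gi[OF bn]])
         (use midpt p1 c in \<open>auto simp: indicator_def Mid_def\<close>)
    finally show ?thesis .
  qed
  have Mid2: "measure \<nu> Mid \<ge> measure \<nu> (dyad Il) / 2"
  proof -
    interpret finite_measure \<nu> using borel_prob_finite[OF bn] .
    have s: "sets \<nu> = sets borel" using sets_bp[OF bn] .
    let ?A = "dyad ((dleft ^^ k) Il)" and ?B = "dyad ((dright ^^ k) Il)"
    have "measure \<nu> (dyad Il) \<le> measure \<nu> (Mid \<union> ?A \<union> ?B)"
      by (rule finite_measure_mono) (auto simp: Mid_def s)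
    also have "\<dots> \<le> measure \<nu> (Mid \<union> ?A) + measure \<nu> ?B"
      by (rule measure_Un_le) (auto simp: s Mid_def)
    also have "measure \<nu> (Mid \<union> ?A) \<le> measure \<nu> Mid + measure \<nu> ?A"
      by (rule measure_Un_le) (auto simp: s Mid_def)
    finally have u: "measure \<nu> (dyad Il) \<le> measure \<nu> Mid + measure \<nu> ?A + measure \<nu> ?B" by simp
    have nn: "measure \<nu> (dyad Il) \<ge> 0" by simp
    have "measure \<nu> ?A \<le> (1 - 1/D) ^ k * measure \<nu> (dyad Il)" using decay(1)[OF bn dd dyl] .
    also have "\<dots> \<le> 1/4 * measure \<nu> (dyad Il)" using kk nn by (rule mult_right_mono)
    finally have a: "measure \<nu> ?A \<le> 1/4 * measure \<nu> (dyad Il)" .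
    have "measure \<nu> ?B \<le> (1 - 1/D) ^ k * measure \<nu> (dyad Il)" using decay(2)[OF bn dd dyl] .
    also have "\<dots> \<le> 1/4 * measure \<nu> (dyad Il)" using kk nn by (rule mult_right_mono)
    finally have b: "measure \<nu> ?B \<le> 1/4 * measure \<nu> (dyad Il)" .
    show ?thesis using u a b by linarith
  qed
  have Gn: "G \<nu> \<ge> measure \<nu> (dyad Il) / (2 * L)"
  proof -
    have "measure \<nu> (dyad Il) / (2 * L) = c * (measure \<nu> (dyad Il) / 2)" by (simp add: c_def)
    also have "\<dots> \<le> c * measure \<nu> Mid" using Mid2 c by simp
    finally show ?thesis using Gn1 by linarith
  qed
  have Gm1: "G \<mu> \<le> measure \<mu> (dyad Il) / L" using Gb[OF bm] by (simp add: c_def)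
  have hA0: "\<bar>G \<mu> / (2 * measure \<mu> (dyad I)) - G \<nu> / (2 * measure \<nu> (dyad I))\<bar> \<le> alpha \<mu> \<nu> I"
    using W1_ge[OF bm bn lip0 z0, of I] int0[OF bm mpos] int0[OF bn npos] by simp
  have hA: "\<bar>G \<mu> / measure \<mu> (dyad I) - G \<nu> / measure \<nu> (dyad I)\<bar> \<le> 2 * alpha \<mu> \<nu> I"
  proof -
    have "G \<mu> / (2 * measure \<mu> (dyad I)) - G \<nu> / (2 * measure \<nu> (dyad I))
       = (G \<mu> / measure \<mu> (dyad I) - G \<nu> / measure \<nu> (dyad I)) / 2" by (simp add: field_simps)
    then show ?thesis using hA0 by simp
  qed
  have hB: "\<bar>G \<mu> / measure \<mu> (dyad Il) - G \<nu> / measure \<nu> (dyad Il)\<bar> \<le> alpha \<mu> \<nu> Il"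
    if "measure \<mu> (dyad Il) > 0"
    using W1_ge[OF bm bn lip1 z1, of Il] int1[OF bm that] int1[OF bn nlpos] by simp
  have dm: "Delta_mass \<mu> \<nu> I = \<bar>measure \<mu> (dyad Il) / measure \<mu> (dyad I) - measure \<nu> (dyad Il) / measure \<nu> (dyad I)\<bar> * measure \<mu> (dyad I)"
    using mpos by (simp add: Delta_mass_def Delta_def Il_def)
  have mlnn: "measure \<mu> (dyad Il) \<ge> 0" by simp
  show "Delta_mass \<mu> \<nu> I \<le> 4*2^k*alpha \<mu> \<nu> I * measure \<mu> (dyad I)
            + 2*2^k*alpha \<mu> \<nu> (dleft I) * measure \<mu> (dyad (dleft I))"
    using alg_reg[OF mpos npos mlnn nlpos L G0 Gm1 Gn hA hB alpha_nonneg[OF bm bn]]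
    by (simp add: dm L_def Il_def)
  show "Delta_mass \<mu> \<nu> I \<le> 4*2^k*alpha \<mu> \<nu> I * measure \<mu> (dyad I)
            + 2*measure \<mu> (dyad (dleft I))"
    using alg_sp[OF mpos npos mlnn nlpos L G0 Gm1 Gn hA]
    by (simp add: dm L_def Il_def)
qed



lemma enn_le_aux: "x \<le> y \<Longrightarrow> 0 \<le> z \<Longrightarrow> x \<le> y + (z::ennreal)"
  by (simp add: add_increasing2)

theorem mainTheorem14:
  fixes \<kappa> D :: real
  assumes "\<kappa> > 0"
  shows "\<exists>C::real. \<forall>\<mu> \<nu>.
    borel_prob_01 \<mu> \<and> borel_prob_01 \<nu> \<and>
    (\<forall>j k :: nat. measure \<mu> {real j / 2 ^ k} = 0) \<and>
    dyadically_doubling \<nu> D \<longrightarrow>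
    (\<forall>I p. is_dyadic I \<longrightarrow>
       ennreal (Delta_mass \<mu> \<nu> I)
       \<le> ennreal C * (\<Sum>\<^sub>\<infinity>J\<in>Tail p I. ennreal (alpha \<mu> \<nu> J * measure \<mu> (dyad J)))
         + ennreal \<kappa> * (\<Sum>\<^sub>\<infinity>J\<in>Tail p I. ennreal (Delta_mass \<mu> \<nu> J))
         + 4 * ennreal (measure \<mu> (Tip p I)))"
proof -
  have "1 - 1 / max D 1 < 1" by simp
  from real_arch_pow_inv[of "1/4", OF _ this]
  obtain k where kk0: "(1 - 1 / max D 1) ^ k < 1/4" by auto
  define C :: real where "C = 4 * 2 ^ k"
  have C0: "C \<ge> 0" by (simp add: C_def)
  show ?thesis
  proof (intro exI[of _ C] allI impI)
    fix \<mu> \<nu> :: "real measure" and I p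
    assume H: "borel_prob_01 \<mu> \<and> borel_prob_01 \<nu> \<and>
      (\<forall>j k :: nat. measure \<mu> {real j / 2 ^ k} = 0) \<and> dyadically_doubling \<nu> D"
      and dy: "is_dyadic I"
    have bm: "borel_prob_01 \<mu>" and bn: "borel_prob_01 \<nu>" and dd: "dyadically_doubling \<nu> D"
      using H by auto
    have "D \<ge> 1" using D_ge1[OF bn dd] .
    then have kk: "(1 - 1/D) ^ k \<le> 1/4" using kk0 by (simp add: max_def)
    let ?f = "\<lambda>J. ennreal (alpha \<mu> \<nu> J * measure \<mu> (dyad J))"
    let ?g = "\<lambda>J. ennreal (Delta_mass \<mu> \<nu> J)"
    let ?R = "ennreal C * (\<Sum>\<^sub>\<infinity>J\<in>Tail p I. ?f J) + ennreal \<kappa> * (\<Sum>\<^sub>\<infinity>J\<in>Tail p I. ?g J)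
         + 4 * ennreal (measure \<mu> (Tip p I))"
    show "ennreal (Delta_mass \<mu> \<nu> I) \<le> ?R"
    proof (cases "measure \<mu> (dyad I) = 0")
      case True
      then show ?thesis by (simp add: Delta_mass_def)
    next
      case False
      then have mpos: "measure \<mu> (dyad I) > 0" by (simp add: order_neq_le_trans)
      define x where "x = alpha \<mu> \<nu> I * measure \<mu> (dyad I)"
      define y where "y = alpha \<mu> \<nu> (dleft I) * measure \<mu> (dyad (dleft I))"
      have x0: "x \<ge> 0" and y0: "y \<ge> 0"
        using alpha_nonneg[OF bm bn] by (simp_all add: x_def y_def)
      show ?thesis
      proof (cases p)
        case (Reg N1 N2)
        have sub: "{I, dleft I} \<subseteq> Tail p I"
        proof -
          have "I \<in> Tail p I"
            unfolding Reg Tail_def by (auto intro!: exI[of _ 0] simp: zero_enat_def[symmetric])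
          moreover have "dleft I \<in> Tail p I"
            unfolding Reg Tail_def by (auto intro!: exI[of _ 0] simp: zero_enat_def[symmetric])
          ultimately show ?thesis by simp
        qed
        have ne: "I \<noteq> dleft I" by (cases I) (simp add: dleft_def)
        have "(\<Sum>\<^sub>\<infinity>J\<in>{I, dleft I}. ?f J) \<le> (\<Sum>\<^sub>\<infinity>J\<in>Tail p I. ?f J)"
          by (rule infsum_mono_neutral) (use sub in \<open>auto intro: nonneg_summable_on_complete\<close>)
        moreover have "(\<Sum>\<^sub>\<infinity>J\<in>{I, dleft I}. ?f J) = ennreal x + ennreal y"
          using ne by (simp add: x_def y_def)
        ultimately have T: "ennreal x + ennreal y \<le> (\<Sum>\<^sub>\<infinity>J\<in>Tail p I. ?f J)" by simp
        have "Delta_mass \<mu> \<nu> I \<le> 4*2^k*alpha \<mu> \<nu> I * measure \<mu> (dyad I)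
            + 2*2^k*alpha \<mu> \<nu> (dleft I) * measure \<mu> (dyad (dleft I))"
          by (rule core(1)[OF bm bn dd dy kk mpos])
        also have "\<dots> = C * x + (C/2) * y" by (simp add: C_def x_def y_def)
        also have "\<dots> \<le> C * (x + y)" using y0 C0 by (simp add: algebra_simps)
        finally have "ennreal (Delta_mass \<mu> \<nu> I) \<le> ennreal (C * (x + y))" by (rule ennreal_leI)
        also have "\<dots> = ennreal C * (ennreal x + ennreal y)"
          using x0 y0 C0 by (simp add: ennreal_mult ennreal_plus)
        also have "\<dots> \<le> ennreal C * (\<Sum>\<^sub>\<infinity>J\<in>Tail p I. ?f J)" using T by (rule mult_left_mono) simp
        also have "\<dots> \<le> ?R" by (simp add: add.assoc add_increasing2)
        finally show ?thesis .
      next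
        case Special
        have "Delta_mass \<mu> \<nu> I \<le> 4*2^k*alpha \<mu> \<nu> I * measure \<mu> (dyad I)
            + 2*measure \<mu> (dyad (dleft I))"
          by (rule core(2)[OF bm bn dd dy kk mpos])
        also have "\<dots> = C * x + 2*measure \<mu> (dyad (dleft I))" by (simp add: C_def x_def)
        finally have "ennreal (Delta_mass \<mu> \<nu> I) \<le> ennreal (C * x + 2*measure \<mu> (dyad (dleft I)))"
          by (rule ennreal_leI)
        also have "\<dots> = ennreal C * ennreal x + 2 * ennreal (measure \<mu> (dyad (dleft I)))"
          using x0 C0 by (simp add: ennreal_mult ennreal_plus)
        also have "\<dots> \<le> ennreal C * ennreal x + 4 * ennreal (measure \<mu> (dyad (dleft I)))"
          by (intro add_left_mono mult_right_mono) auto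
        also have "\<dots> \<le> ?R"
          by (simp add: Special Tail_def Tip_def x_def add_increasing2 add_mono)
        finally show ?thesis .
      qed
    qed
  qed
qed

end
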